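(* There exists an absolute constant $C>0$ such that for any $\delta\in(0,1)$, if $z_1,\dots,z_n$ are i.i.d. $\mathcal{N}(0,I_d)$ and $n\ge C(d^2+\log^2(1/\delta))$, then with probability at least $1-\delta$, $$\sup_{v\in\mathbb{S}^{d-1}}\frac1n\sum_{i=1}^n(z_i^\top v)^4\le 8.$$
   Context: $\mathbb{S}^{d-1}$ is the unit sphere in $\mathbb{R}^d$. *)

theory Defs
  imports "HOL-Probability.Probability"
begin

definition std_gaussian :: "real measure" where
  "std_gaussian = density lborel std_normal_density"

text \<open>Joint law of n i.i.d. N(0, I_d) vectors z_1..z_n: the sample is
  \<omega> :: nat \<Rightarrow> nat \<Rightarrow> real, with (z_i)_j = \<omega> i j for i < n, j < d.\<close>
definition gaussian_sample :: "nat \<Rightarrow> nat \<Rightarrow> (nat \<Rightarrow> nat \<Rightarrow> real) measure" where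
  "gaussian_sample n d = PiM {..<n} (\<lambda>_. PiM {..<d} (\<lambda>_. std_gaussian))"

end

theory Submission
  imports Defs
begin

lemma sets_std_gaussian[measurable_cong, simp]: "sets std_gaussian = sets borel"
  by (simp add: std_gaussian_def)
lemma space_std_gaussian[simp]: "space std_gaussian = UNIV"
  by (simp add: std_gaussian_def)
lemma prob_space_std_gaussian: "prob_space std_gaussian"
  unfolding std_gaussian_def using prob_space_normal_density by simp

lemma coord_distributed:
  assumes "j \<in> J"
  shows "distributed (PiM J (\<lambda>_. std_gaussian)) lborel (\<lambda>\<omega>. \<omega> j) std_normal_density"
proof -
  have "distr (PiM J (\<lambda>_. std_gaussian)) lborel (\<lambda>\<omega>. \<omega> j) = distr (PiM J (\<lambda>_. std_gaussian)) std_gaussian (\<lambda>\<omega>. \<omega> j)"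
    by (rule distr_cong) auto
  also have "\<dots> = std_gaussian"
    by (rule distr_PiM_component) (auto simp: prob_space_std_gaussian assms)
  finally show ?thesis unfolding distributed_def std_gaussian_def
    using assms by auto
qed

lemma prob_space_PiG: "prob_space (PiM J (\<lambda>_. std_gaussian))"
  by (rule prob_space_PiM) (rule prob_space_std_gaussian)

lemma indep_coords:
  assumes "J \<noteq> {}"
  shows "prob_space.indep_vars (PiM J (\<lambda>_. std_gaussian)) (\<lambda>_. borel) (\<lambda>j \<omega>. \<omega> j) J"
proof -
  interpret P: prob_space "PiM J (\<lambda>_. std_gaussian)" by (rule prob_space_PiG)
  have 1: "distr (PiM J (\<lambda>_. std_gaussian)) (PiM J (\<lambda>_. borel)) (\<lambda>x. \<lambda>j\<in>J. x j) = PiM J (\<lambda>_. std_gaussian)"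
  proof -
    have "distr (PiM J (\<lambda>_. std_gaussian)) (PiM J (\<lambda>_. borel)) (\<lambda>x. \<lambda>j\<in>J. x j)
       = distr (PiM J (\<lambda>_. std_gaussian)) (PiM J (\<lambda>_. std_gaussian)) (\<lambda>x. x)"
      by (rule distr_cong) (auto simp: space_PiM intro!: sets_PiM_cong)
    then show ?thesis by simp
  qed
  have 2: "distr (PiM J (\<lambda>_. std_gaussian)) borel (\<lambda>\<omega>. \<omega> j) = std_gaussian" if "j \<in> J" for j
  proof -
    have "distr (PiM J (\<lambda>_. std_gaussian)) borel (\<lambda>\<omega>. \<omega> j) = distr (PiM J (\<lambda>_. std_gaussian)) std_gaussian (\<lambda>\<omega>. \<omega> j)"
      by (rule distr_cong) auto
    also have "\<dots> = std_gaussian"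
      by (rule distr_PiM_component) (auto simp: prob_space_std_gaussian that)
    finally show ?thesis .
  qed
  have 3: "(\<Pi>\<^sub>M j\<in>J. distr (PiM J (\<lambda>_. std_gaussian)) borel (\<lambda>\<omega>. \<omega> j)) = PiM J (\<lambda>_. std_gaussian)"
    by (rule PiM_cong) (auto simp: 2)
  show ?thesis
    by (subst P.indep_vars_iff_distr_eq_PiM'[OF assms]) (auto simp: 1 3)
qed

lemma lin_distributed:
  assumes "finite J" "(\<Sum>j\<in>J. (u j)\<^sup>2) = 1"
  shows "distributed (PiM J (\<lambda>_. std_gaussian)) lborel (\<lambda>\<omega>. \<Sum>j\<in>J. \<omega> j * u j) std_normal_density"
proof -
  interpret P: prob_space "PiM J (\<lambda>_. std_gaussian)" by (rule prob_space_PiG)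
  define K where "K = {j\<in>J. u j \<noteq> 0}"
  have KJ: "K \<subseteq> J" and fK: "finite K" using assms by (auto simp: K_def)
  have sK: "(\<Sum>j\<in>K. (u j)\<^sup>2) = 1"
    using assms(2) by (subst sum.mono_neutral_left[OF assms(1) KJ]) (auto simp: K_def)
  have Kne: "K \<noteq> {}" using sK by auto
  have ind: "P.indep_vars (\<lambda>_. borel) (\<lambda>j \<omega>. u j * \<omega> j) K"
    apply (rule P.indep_vars_compose2[where X="\<lambda>j \<omega>. \<omega> j" and M'="\<lambda>_. borel"])
     apply (rule P.indep_vars_subset[OF indep_coords KJ])
    using Kne KJ apply auto
    done
  have dj: "distributed (PiM J (\<lambda>_. std_gaussian)) lborel (\<lambda>\<omega>. u j * \<omega> j) (normal_density 0 \<bar>u j\<bar>)"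
    if "j \<in> K" for j
    using P.normal_density_affine[OF coord_distributed[of j J], where \<alpha>="u j" and \<beta>=0] that
    by (auto simp: K_def)
  have "distributed (PiM J (\<lambda>_. std_gaussian)) lborel (\<lambda>\<omega>. \<Sum>j\<in>K. u j * \<omega> j)
      (normal_density (\<Sum>j\<in>K. 0) (sqrt (\<Sum>j\<in>K. (\<bar>u j\<bar>)\<^sup>2)))"
    by (rule P.sum_indep_normal[OF fK Kne ind]) (auto simp: K_def dj)
  moreover have "(\<lambda>\<omega>. \<Sum>j\<in>K. u j * \<omega> j) = (\<lambda>\<omega>. \<Sum>j\<in>J. \<omega> j * u j)"
    by (rule ext, subst sum.mono_neutral_left[OF assms(1) KJ]) (auto simp: K_def mult.commute)
  ultimately show ?thesis using sK by simp
qed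

lemma nn_std: "(\<integral>\<^sup>+x. f x \<partial>std_gaussian) = (\<integral>\<^sup>+x. ennreal (std_normal_density x) * f x \<partial>lborel)"
  if [measurable]: "f \<in> borel_measurable borel"
  unfolding std_gaussian_def by (subst nn_integral_density) auto

lemma moment_even_nn: "(\<integral>\<^sup>+x. ennreal (x ^ (2*k)) \<partial>std_gaussian) = ennreal (fact (2 * k) / (2^k * fact k))"
proof -
  have "(\<integral>\<^sup>+x. ennreal (x ^ (2*k)) \<partial>std_gaussian) = (\<integral>\<^sup>+x. ennreal (std_normal_density x * x ^ (2*k)) \<partial>lborel)"
    by (subst nn_std) (auto simp: ennreal_mult')
  also have "\<dots> = ennreal (integral\<^sup>L lborel (\<lambda>x. std_normal_density x * x ^ (2*k)))"
    using std_normal_moment_even[of k] unfolding has_bochner_integral_iff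
    by (intro nn_integral_eq_integral) (auto simp: zero_le_even_power)
  also have "\<dots> = ennreal (fact (2 * k) / (2^k * fact k))"
    using std_normal_moment_even[of k] has_bochner_integral_integral_eq by metis
  finally show ?thesis .
qed

lemma moment4: "(\<integral>\<^sup>+x. ennreal (x ^ 4) \<partial>std_gaussian) = 3"
  using moment_even_nn[of 2] by (simp add: fact_numeral)
lemma moment8: "(\<integral>\<^sup>+x. ennreal (x ^ 8) \<partial>std_gaussian) = 105"
  using moment_even_nn[of 4] by (simp add: fact_numeral)

lemma nn_normal_density: "0 < \<sigma> \<Longrightarrow> (\<integral>\<^sup>+x. ennreal (normal_density \<mu> \<sigma> x) \<partial>lborel) = 1"
  by (subst nn_integral_eq_integral) auto

lemma exp_sq3: "(\<integral>\<^sup>+x. ennreal (exp (x\<^sup>2/3)) \<partial>std_gaussian) = ennreal (sqrt 3)"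
proof -
  have eq: "std_normal_density x * exp (x\<^sup>2/3) = sqrt 3 * normal_density 0 (sqrt 3) x" for x
  proof -
    have "exp (- x\<^sup>2 / 2) * exp (x\<^sup>2/3) = exp (-(x\<^sup>2) / 6)"
      by (subst exp_add[symmetric]) (simp add: field_simps)
    moreover have "sqrt 6 = sqrt 2 * sqrt 3" using real_sqrt_mult[of 2 3] by simp
    ultimately show ?thesis
      unfolding std_normal_density_def normal_density_def
      by (simp add: real_sqrt_mult field_simps)
  qed
  have "(\<integral>\<^sup>+x. ennreal (exp (x\<^sup>2/3)) \<partial>std_gaussian) = (\<integral>\<^sup>+x. ennreal (sqrt 3) * ennreal (normal_density 0 (sqrt 3) x) \<partial>lborel)"
    by (subst nn_std) (auto simp: ennreal_mult'[symmetric] eq)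
  also have "\<dots> = ennreal (sqrt 3)"
    by (subst nn_integral_cmult) (auto simp: nn_normal_density)
  finally show ?thesis .
qed

lemma prob_G: "emeasure std_gaussian UNIV = 1"
  using prob_space.emeasure_space_1[OF prob_space_std_gaussian] by simp

lemma E1:
  assumes l: "0 \<le> l" "l * a \<le> 1" "0 \<le> a"
  shows "(\<integral>\<^sup>+x. ennreal (exp (l * min (x^4) a)) \<partial>std_gaussian) \<le> ennreal (exp (3*l + 105*l\<^sup>2))"
proof -
  have pw: "exp (l * min (x^4) a) \<le> 1 + l * x^4 + l\<^sup>2 * x^8" for x :: real
  proof -
    have y0: "0 \<le> l * min (x^4) a" using l by (auto intro!: mult_nonneg_nonneg)
    have y1: "l * min (x^4) a \<le> 1" using l by (meson dual_order.trans min.cobounded2 mult_left_mono)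
    have "exp (l * min (x^4) a) \<le> 1 + l * min (x^4) a + (l * min (x^4) a)\<^sup>2" by (rule exp_bound[OF y0 y1])
    also have "\<dots> \<le> 1 + l * x^4 + l\<^sup>2 * x^8"
    proof -
      have a1: "l * min (x^4) a \<le> l * x^4" using l by (simp add: mult_left_mono)
      have "(l * min (x^4) a)\<^sup>2 \<le> (l * x^4)\<^sup>2" using a1 y0 by (rule power_mono)
      also have "(l * x^4)\<^sup>2 = l\<^sup>2 * x^8" by (simp add: power_mult_distrib power_mult[symmetric])
      finally show ?thesis using a1 by linarith
    qed
    finally show ?thesis .
  qed
  have "(\<integral>\<^sup>+x. ennreal (exp (l * min (x^4) a)) \<partial>std_gaussian) \<le> (\<integral>\<^sup>+x. ennreal (1 + l * x^4 + l\<^sup>2 * x^8) \<partial>std_gaussian)"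
    by (rule nn_integral_mono) (intro ennreal_leI pw)
  also have "\<dots> = (\<integral>\<^sup>+x. ennreal 1 + ennreal l * ennreal (x^4) + ennreal (l\<^sup>2) * ennreal (x^8) \<partial>std_gaussian)"
    using l by (intro nn_integral_cong) (simp add: ennreal_plus ennreal_mult' zero_le_even_power del: ennreal_1)
  also have "\<dots> = 1 + ennreal l * 3 + ennreal (l\<^sup>2) * 105"
    by (simp add: nn_integral_add nn_integral_cmult moment4 moment8 prob_G mult.commute)
  also have "\<dots> = ennreal (1 + 3*l + 105*l\<^sup>2)"
    using l by (simp add: ennreal_plus ennreal_mult' ac_simps)
  also have "\<dots> \<le> ennreal (exp (3*l + 105*l\<^sup>2))"
    by (intro ennreal_leI) (metis add.assoc exp_ge_add_one_self)
  finally show ?thesis .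
qed

lemma E2:
  assumes "0 \<le> a"
  shows "(\<integral>\<^sup>+x. ennreal (exp ((if a < x^4 then x\<^sup>2 else 0) / 4)) \<partial>std_gaussian) \<le> ennreal (1 + sqrt 3 * exp (- sqrt a / 12))"
proof -
  have pw: "exp ((if a < x^4 then x\<^sup>2 else 0) / 4) \<le> 1 + exp (- sqrt a / 12) * exp (x\<^sup>2/3)" for x :: real
  proof (cases "a < x^4")
    case True
    have "sqrt a < sqrt (x^4)" using True assms by simp
    also have "sqrt (x^4) = x\<^sup>2"
    proof -
      have "sqrt ((x\<^sup>2)\<^sup>2) = x\<^sup>2" using real_sqrt_abs[of "x\<^sup>2"] by simp
      moreover have "(x\<^sup>2)\<^sup>2 = x^4" by simp
      ultimately show ?thesis by simp
    qed
    finally have s: "sqrt a < x\<^sup>2" .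
    have "exp (x\<^sup>2 / 4) = exp (- x\<^sup>2 / 12) * exp (x\<^sup>2/3)" by (subst exp_add[symmetric]) (simp add: field_simps)
    also have "\<dots> \<le> exp (- sqrt a / 12) * exp (x\<^sup>2/3)" using s by (intro mult_right_mono) auto
    finally show ?thesis using True by simp
  next
    case False then show ?thesis by (simp add: add_increasing2)
  qed
  have "(\<integral>\<^sup>+x. ennreal (exp ((if a < x^4 then x\<^sup>2 else 0) / 4)) \<partial>std_gaussian) \<le> (\<integral>\<^sup>+x. ennreal (1 + exp (- sqrt a / 12) * exp (x\<^sup>2/3)) \<partial>std_gaussian)"
    by (rule nn_integral_mono) (intro ennreal_leI pw)
  also have "\<dots> = (\<integral>\<^sup>+x. ennreal 1 + ennreal (exp (- sqrt a / 12)) * ennreal (exp (x\<^sup>2/3)) \<partial>std_gaussian)"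
    by (intro nn_integral_cong) (simp add: ennreal_plus ennreal_mult' del: ennreal_1)
  also have "\<dots> = 1 + ennreal (exp (- sqrt a / 12)) * ennreal (sqrt 3)"
    by (simp add: nn_integral_add nn_integral_cmult exp_sq3 prob_G)
  also have "\<dots> = ennreal (1 + sqrt 3 * exp (- sqrt a / 12))"
    by (subst ennreal_plus) (auto simp: ennreal_mult'[symmetric] mult.commute)
  finally show ?thesis .
qed

definition gu :: "nat \<Rightarrow> (nat \<Rightarrow> real) \<Rightarrow> (nat \<Rightarrow> real) \<Rightarrow> real" where
  "gu d u x = (\<Sum>j<d. x j * u j)"

lemma gu_meas[measurable]: "gu d u \<in> borel_measurable (PiM {..<d} (\<lambda>_. std_gaussian))"
  unfolding gu_def by measurable

lemma one_var:
  assumes "(\<Sum>j<d. (u j)\<^sup>2) = 1" and [measurable]: "h \<in> borel_measurable borel"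
  shows "(\<integral>\<^sup>+x. h (gu d u x) \<partial>PiM {..<d} (\<lambda>_. std_gaussian)) = (\<integral>\<^sup>+x. h x \<partial>std_gaussian)"
proof -
  have D: "distributed (PiM {..<d} (\<lambda>_. std_gaussian)) lborel (gu d u) std_normal_density"
    unfolding gu_def[abs_def] by (rule lin_distributed) (use assms in auto)
  show ?thesis
    using distributed_nn_integral[OF D, of h] by (simp add: nn_std)
qed

lemma chernoff:
  assumes u: "(\<Sum>j<d. (u j)\<^sup>2) = 1" and [measurable]: "\<phi> \<in> borel_measurable borel" and l: "0 \<le> l"
  shows "emeasure (gaussian_sample n d) {\<omega> \<in> space (gaussian_sample n d). t < (\<Sum>i<n. \<phi> (gu d u (\<omega> i)))}
     \<le> ennreal (exp (- l * t)) * (\<integral>\<^sup>+x. ennreal (exp (l * \<phi> x)) \<partial>std_gaussian) ^ n"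
proof -
  let ?M = "PiM {..<d} (\<lambda>_. std_gaussian)"
  let ?P = "gaussian_sample n d"
  interpret PP: product_prob_space "\<lambda>_. ?M"
    unfolding product_prob_space_def product_prob_space_axioms_def product_sigma_finite_def
    using prob_space_PiG prob_space_imp_sigma_finite by auto
  have Pdef: "?P = PiM {..<n} (\<lambda>_. ?M)" unfolding gaussian_sample_def ..
  let ?S = "{\<omega> \<in> space ?P. t < (\<Sum>i<n. \<phi> (gu d u (\<omega> i)))}"
  have Sm: "?S \<in> sets ?P" unfolding Pdef by measurable
  have "emeasure ?P ?S = (\<integral>\<^sup>+\<omega>. indicator ?S \<omega> \<partial>?P)"
    using Sm by simp
  also have "\<dots> \<le> (\<integral>\<^sup>+\<omega>. ennreal (exp (- l * t)) * (\<Prod>i<n. ennreal (exp (l * \<phi> (gu d u (\<omega> i))))) \<partial>?P)"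
  proof (rule nn_integral_mono)
    fix \<omega> assume "\<omega> \<in> space ?P"
    have eq: "ennreal (exp (- l * t)) * (\<Prod>i<n. ennreal (exp (l * \<phi> (gu d u (\<omega> i)))))
       = ennreal (exp (l * ((\<Sum>i<n. \<phi> (gu d u (\<omega> i))) - t)))"
      by (simp add: prod_ennreal ennreal_mult'[symmetric] exp_sum[symmetric] exp_add[symmetric]
            sum_distrib_left algebra_simps)
    show "indicator ?S \<omega> \<le> ennreal (exp (- l * t)) * (\<Prod>i<n. ennreal (exp (l * \<phi> (gu d u (\<omega> i)))))"
      unfolding eq
    proof (cases "\<omega> \<in> ?S")
      case True
      then have "0 \<le> l * ((\<Sum>i<n. \<phi> (gu d u (\<omega> i))) - t)" using l by (auto intro!: mult_nonneg_nonneg)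
      then have "1 \<le> exp (l * ((\<Sum>i<n. \<phi> (gu d u (\<omega> i))) - t))" by simp
      then show "indicator ?S \<omega> \<le> ennreal (exp (l * ((\<Sum>i<n. \<phi> (gu d u (\<omega> i))) - t)))"
        using True by simp
    next
      case False
      then show "indicator ?S \<omega> \<le> ennreal (exp (l * ((\<Sum>i<n. \<phi> (gu d u (\<omega> i))) - t)))"
        by (subst indicator_simps(2)[OF False]) simp
    qed
  qed
  also have "\<dots> = ennreal (exp (- l * t)) * (\<integral>\<^sup>+\<omega>. (\<Prod>i<n. ennreal (exp (l * \<phi> (gu d u (\<omega> i))))) \<partial>?P)"
    by (rule nn_integral_cmult) (simp add: Pdef)
  also have "(\<integral>\<^sup>+\<omega>. (\<Prod>i<n. ennreal (exp (l * \<phi> (gu d u (\<omega> i))))) \<partial>?P)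
      = (\<Prod>i<n. (\<integral>\<^sup>+x. ennreal (exp (l * \<phi> (gu d u x))) \<partial>?M))"
    unfolding Pdef by (rule PP.product_nn_integral_prod) auto
  also have "\<dots> = (\<integral>\<^sup>+x. ennreal (exp (l * \<phi> x)) \<partial>std_gaussian) ^ n"
    using one_var[OF u, of "\<lambda>x. ennreal (exp (l * \<phi> x))"] by simp
  finally show ?thesis .
qed

lemma sum_sq_le_sq_sum:
  fixes y :: "'a \<Rightarrow> real"
  assumes "finite I" "\<And>i. i \<in> I \<Longrightarrow> 0 \<le> y i"
  shows "(\<Sum>i\<in>I. (y i)\<^sup>2) \<le> (\<Sum>i\<in>I. y i)\<^sup>2"
proof -
  have "(\<Sum>i\<in>I. (y i)\<^sup>2) \<le> (\<Sum>i\<in>I. y i * (\<Sum>k\<in>I. y k))"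
    by (rule sum_mono) (use assms in \<open>auto simp: power2_eq_square intro!: mult_left_mono member_le_sum\<close>)
  also have "\<dots> = (\<Sum>i\<in>I. y i)\<^sup>2" by (simp add: power2_eq_square sum_distrib_right)
  finally show ?thesis .
qed

definition phi2 :: "real \<Rightarrow> real \<Rightarrow> real" where
  "phi2 a x = (if a < x^4 then x\<^sup>2 else 0)"

lemma split_event:
  fixes x :: "nat \<Rightarrow> real"
  assumes "5 * real n < (\<Sum>i<n. (x i)^4)" "0 \<le> a"
  shows "4 * real n < (\<Sum>i<n. min ((x i)^4) a) \<or> sqrt (real n) < (\<Sum>i<n. phi2 a (x i))"
proof (rule ccontr)
  assume "\<not> ?thesis"
  then have h1: "(\<Sum>i<n. min ((x i)^4) a) \<le> 4 * real n" and h2: "(\<Sum>i<n. phi2 a (x i)) \<le> sqrt (real n)" by auto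
  have pw: "(x i)^4 - min ((x i)^4) a \<le> (phi2 a (x i))\<^sup>2" for i
  proof -
    have "((x i)^2)^2 = (x i)^4" by simp
    then show ?thesis unfolding phi2_def using assms(2) by auto
  qed
  have "real n < (\<Sum>i<n. (x i)^4 - min ((x i)^4) a)"
    using assms(1) h1 by (simp add: sum_subtractf)
  also have "\<dots> \<le> (\<Sum>i<n. (phi2 a (x i))\<^sup>2)" by (rule sum_mono) (rule pw)
  also have "\<dots> \<le> (\<Sum>i<n. phi2 a (x i))\<^sup>2" by (rule sum_sq_le_sq_sum) (auto simp: phi2_def)
  also have "\<dots> \<le> (sqrt (real n))\<^sup>2"
    using h2 by (intro power_mono) (auto simp: phi2_def intro!: sum_nonneg)
  finally show False by simp
qed

lemma ln_bound:
  assumes "1 \<le> (n::real)"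
  shows "(ln (2*n) + 2)\<^sup>2 \<le> 16 * sqrt n"
proof -
  define s where "s = sqrt (sqrt n)"
  have s1: "1 \<le> s" using assms by (simp add: s_def)
  have s2: "s^2 = sqrt n" using assms by (simp add: s_def)
  have n4: "n = s^4" using assms s2 
  proof -
    have "s^4 = (s^2)^2" by simp
    also have "\<dots> = n" using s2 assms by simp
    finally show ?thesis by simp
  qed
  have "ln (2*n) = ln 2 + 4 * ln s" using assms s1 n4 by (simp add: ln_mult ln_realpow)
  also have "\<dots> \<le> 1 + 4 * (s - 1)"
    using ln_le_minus_one[of s] s1 ln_2_less_1 by (smt (verit) ln_le_minus_one)
  finally have "0 \<le> ln (2*n) + 2" "ln (2*n) + 2 \<le> 4 * s" using s1 assms by auto
  then have "(ln (2*n) + 2)^2 \<le> (4 * s)^2" by (intro power_mono)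
  also have "(4 * s)^2 = 16 * sqrt n" using s2 by (simp add: power_mult_distrib)
  finally show ?thesis .
qed

lemma prob_space_sample: "prob_space (gaussian_sample n d)"
  unfolding gaussian_sample_def by (rule prob_space_PiM) (rule prob_space_PiG)

lemma sample_meas_gu[measurable]:
  "i \<in> {..<n} \<Longrightarrow> (\<lambda>\<omega>. gu d u (\<omega> i)) \<in> borel_measurable (gaussian_sample n d)"
  unfolding gaussian_sample_def
  by (rule measurable_compose[where f="\<lambda>\<omega>. \<omega> i" and g="gu d u", OF measurable_component_singleton gu_meas]) simp

lemma E2':
  assumes "0 \<le> a"
  shows "(\<integral>\<^sup>+x. ennreal (exp (1/4 * phi2 a x)) \<partial>std_gaussian) \<le> ennreal (1 + sqrt 3 * exp (- sqrt a / 12))"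
proof -
  have "(\<lambda>x. ennreal (exp (1/4 * phi2 a x))) = (\<lambda>x. ennreal (exp ((if a < x^4 then x\<^sup>2 else 0) / 4)))"
    by (auto simp: phi2_def)
  then show ?thesis using E2[OF assms] by simp
qed

lemma phi2_meas[measurable]: "phi2 a \<in> borel_measurable borel"
  unfolding phi2_def by measurable

lemma ennreal_mult_power: "0 \<le> a \<Longrightarrow> 0 \<le> b \<Longrightarrow> ennreal a * ennreal b ^ n = ennreal (a * b ^ n)"
  by (simp add: ennreal_mult ennreal_power)

lemma tail_fixed:
  assumes u: "(\<Sum>j<d. (u j)\<^sup>2) = 1" and n: "1 \<le> n"
  shows "measure (gaussian_sample n d) {\<omega> \<in> space (gaussian_sample n d). 5 * real n < (\<Sum>i<n. (gu d u (\<omega> i))^4)}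
    \<le> 4 * exp (- sqrt (real n) / 4608)"
proof -
  let ?P = "gaussian_sample n d"
  interpret P: prob_space ?P by (rule prob_space_sample)
  define a where "a = 144 * (ln (2 * real n) + 2)\<^sup>2"
  have ln0: "0 \<le> ln (2 * real n)" using n by simp
  have a576: "576 \<le> a"
  proof -
    have "2 \<le> ln (2 * real n) + 2" using ln0 by simp
    then have "2^2 \<le> (ln (2 * real n) + 2)^2" by (intro power_mono) auto
    then show ?thesis unfolding a_def by simp
  qed
  have a0: "0 < a" using a576 by simp
  define SA where "SA = {\<omega> \<in> space ?P. 4 * real n < (\<Sum>i<n. (\<lambda>x. min (x^4) a) (gu d u (\<omega> i)))}"
  define SB where "SB = {\<omega> \<in> space ?P. sqrt (real n) < (\<Sum>i<n. phi2 a (gu d u (\<omega> i)))}"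
  let ?S = "{\<omega> \<in> space ?P. 5 * real n < (\<Sum>i<n. (gu d u (\<omega> i))^4)}"
  have sub: "?S \<subseteq> SA \<union> SB"
  proof
    fix \<omega> assume w: "\<omega> \<in> ?S"
    then have "5 * real n < (\<Sum>i<n. (gu d u (\<omega> i))^4)" by simp
    from split_event[OF this less_imp_le[OF a0]]
    have "4 * real n < (\<Sum>i<n. min ((gu d u (\<omega> i))^4) a) \<or> sqrt (real n) < (\<Sum>i<n. phi2 a (gu d u (\<omega> i)))" .
    then show "\<omega> \<in> SA \<union> SB" using w unfolding SA_def SB_def by blast
  qed
  have mSA: "SA \<in> P.events" unfolding SA_def by measurable
  have mSB: "SB \<in> P.events" unfolding SB_def by measurable
  have mS: "?S \<in> P.events" by measurable
  have "emeasure ?P SA \<le> ennreal (exp (- (1/a) * (4 * real n))) * (\<integral>\<^sup>+x. ennreal (exp ((1/a) * min (x^4) a)) \<partial>std_gaussian) ^ n"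
    unfolding SA_def by (rule chernoff[OF u]) (use a0 in auto)
  also have "\<dots> \<le> ennreal (exp (- (1/a) * (4 * real n))) * ennreal (exp (3 * (1/a) + 105 * (1/a)\<^sup>2)) ^ n"
    by (intro mult_left_mono power_mono E1) (use a0 in auto)
  also have "\<dots> = ennreal (exp (- (1/a) * (4 * real n)) * exp (3 * (1/a) + 105 * (1/a)\<^sup>2) ^ n)"
    by (simp add: ennreal_power ennreal_mult')
  also have "\<dots> \<le> ennreal (exp (- (real n / (2 * a))))"
  proof (rule ennreal_leI)
    have "exp (3 * (1/a) + 105 * (1/a)\<^sup>2) ^ n = exp (real n * (3 * (1/a) + 105 * (1/a)\<^sup>2))"
      by (simp add: exp_of_nat_mult)
    moreover have "- (1/a) * (4 * real n) + real n * (3 * (1/a) + 105 * (1/a)\<^sup>2) = - (real n / a) * (1 - 105 / a)"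
      using a0 by (simp add: field_simps power2_eq_square)
    ultimately have eq: "exp (- (1/a) * (4 * real n)) * exp (3 * (1/a) + 105 * (1/a)\<^sup>2) ^ n
      = exp (- (real n / a) * (1 - 105 / a))" by (simp add: exp_add[symmetric])
    have "1/2 \<le> 1 - 105 / a" using a576 by (simp add: field_simps)
    then have "real n / a * (1/2) \<le> real n / a * (1 - 105 / a)"
      by (intro mult_left_mono) (use a0 in auto)
    then show "exp (- (1/a) * (4 * real n)) * exp (3 * (1/a) + 105 * (1/a)\<^sup>2) ^ n \<le> exp (- (real n / (2 * a)))"
      unfolding eq by simp
  qed
  finally have A: "emeasure ?P SA \<le> ennreal (exp (- (real n / (2 * a))))" .
  have sqa: "sqrt a = 12 * (ln (2 * real n) + 2)"
    unfolding a_def using ln0 by (simp add: real_sqrt_mult)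
  have ex: "exp (- sqrt a / 12) = exp (-2) / (2 * real n)"
  proof -
    have "- sqrt a / 12 = -2 - ln (2 * real n)" unfolding sqa by simp
    then have "exp (- sqrt a / 12) = exp (-2) / exp (ln (2 * real n))" by (simp add: exp_diff)
    then show ?thesis using n by simp
  qed
  have "emeasure ?P SB \<le> ennreal (exp (- (1/4) * sqrt (real n))) * (\<integral>\<^sup>+x. ennreal (exp ((1/4) * phi2 a x)) \<partial>std_gaussian) ^ n"
    unfolding SB_def by (rule chernoff[OF u]) auto
  also have "\<dots> \<le> ennreal (exp (- (1/4) * sqrt (real n))) * ennreal (1 + sqrt 3 * exp (- sqrt a / 12)) ^ n"
    by (intro mult_left_mono power_mono E2') (use a0 in auto)
  also have "\<dots> = ennreal (exp (- (1/4) * sqrt (real n)) * (1 + sqrt 3 * exp (- sqrt a / 12)) ^ n)"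
  proof -
    have nn: "0 \<le> 1 + sqrt 3 * exp (- sqrt a / 12)" by (simp add: add_nonneg_nonneg)
    show ?thesis by (rule ennreal_mult_power[OF _ nn]) simp
  qed
  also have "\<dots> \<le> ennreal (exp (- (1/4) * sqrt (real n)) * exp 1)"
  proof (intro ennreal_leI mult_left_mono)
    have "(1 + sqrt 3 * exp (- sqrt a / 12)) ^ n \<le> exp (sqrt 3 * exp (- sqrt a / 12)) ^ n"
      by (intro power_mono) (auto simp: add.commute exp_ge_add_one_self)
    also have "\<dots> = exp (real n * (sqrt 3 * exp (- sqrt a / 12)))"
      by (simp add: exp_of_nat_mult[symmetric])
    also have "real n * (sqrt 3 * exp (- sqrt a / 12)) = sqrt 3 * exp (-2) / 2"
      unfolding ex using n by (simp add: field_simps)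
    also have "\<dots> \<le> 1"
    proof -
      have "sqrt 3 \<le> 2" by (rule real_le_lsqrt) auto
      moreover have "exp (-2::real) \<le> 1" by simp
      ultimately have "sqrt 3 * exp (-2::real) \<le> 2 * 1" by (intro mult_mono) auto
      then show ?thesis by simp
    qed
    finally show "(1 + sqrt 3 * exp (- sqrt a / 12)) ^ n \<le> exp 1" by simp
  qed simp
  finally have B: "emeasure ?P SB \<le> ennreal (exp (- (1/4) * sqrt (real n)) * exp 1)" .
  have mA: "P.prob SA \<le> exp (- (real n / (2 * a)))"
    using A by (simp add: P.emeasure_eq_measure)
  have mB: "P.prob SB \<le> exp (- (1/4) * sqrt (real n)) * exp 1"
    using B by (simp add: P.emeasure_eq_measure)
  have "P.prob ?S \<le> P.prob (SA \<union> SB)" by (rule P.finite_measure_mono[OF sub]) (use mSA mSB in auto)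
  also have "\<dots> \<le> P.prob SA + P.prob SB" by (rule measure_subadditive) (use mSA mSB in auto)
  also have "\<dots> \<le> exp (- (real n / (2 * a))) + exp (- (1/4) * sqrt (real n)) * exp 1" using mA mB by simp
  also have "\<dots> \<le> exp (- sqrt (real n) / 4608) + exp (- sqrt (real n) / 4608) * 3"
  proof (intro add_mono mult_mono)
    have sn: "sqrt (real n) * sqrt (real n) = real n" by simp
    have "a \<le> 2304 * sqrt (real n)" using ln_bound[of "real n"] n unfolding a_def by simp
    then have "a * sqrt (real n) \<le> 2304 * sqrt (real n) * sqrt (real n)"
      by (intro mult_right_mono) auto
    moreover have "2304 * sqrt (real n) * sqrt (real n) = 2304 * real n" using sn by (simp only: mult.assoc)
    moreover have "sqrt (real n) * (2 * a) = 2 * (a * sqrt (real n))" by simp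
    ultimately have "sqrt (real n) * (2 * a) \<le> 4608 * real n" by linarith
    then have "sqrt (real n) / 4608 \<le> real n / (2 * a)"
      using a0 by (simp add: field_simps)
    then show "exp (- (real n / (2 * a))) \<le> exp (- sqrt (real n) / 4608)" by simp
    show "exp (- (1/4) * sqrt (real n)) \<le> exp (- sqrt (real n) / 4608)" by simp
    show "exp 1 \<le> (3::real)" using exp_le by simp
  qed auto
  finally show ?thesis by simp
qed

definition Phi :: "(nat \<Rightarrow> nat \<Rightarrow> real) \<Rightarrow> nat \<Rightarrow> nat \<Rightarrow> (nat \<Rightarrow> real) \<Rightarrow> real" where
  "Phi \<omega> n d w = (\<Sum>i<n. (\<Sum>j<d. \<omega> i j * w j) ^ 4)"

definition nsq :: "nat \<Rightarrow> (nat \<Rightarrow> real) \<Rightarrow> real" where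
  "nsq d w = (\<Sum>j<d. (w j)\<^sup>2)"

lemma nsq_nonneg: "0 \<le> nsq d w" unfolding nsq_def by (simp add: sum_nonneg)

lemma Phi_nonneg: "0 \<le> Phi \<omega> n d w"
  unfolding Phi_def by (intro sum_nonneg) (simp add: zero_le_even_power)

lemma Phi_scale: "Phi \<omega> n d (\<lambda>j. c * w j) = c ^ 4 * Phi \<omega> n d w"
proof -
  have e: "(\<Sum>j<d. \<omega> i j * (c * w j)) = c * (\<Sum>j<d. \<omega> i j * w j)" for i
    by (simp add: sum_distrib_left mult.left_commute)
  have "(\<Sum>j<d. \<omega> i j * (c * w j)) ^ 4 = c ^ 4 * (\<Sum>j<d. \<omega> i j * w j) ^ 4" for i
    by (simp only: e power_mult_distrib)
  then show ?thesis unfolding Phi_def sum_distrib_left by simp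
qed

lemma nsq_scale: "nsq d (\<lambda>j. c * w j) = c\<^sup>2 * nsq d w"
  unfolding nsq_def by (simp add: sum_distrib_left power_mult_distrib)

lemma quart_ineq: "(p + q :: real) ^ 4 \<le> (8000 / 6859) * p ^ 4 + 8000 * q ^ 4"
proof -
  have sq: "(x + y)\<^sup>2 \<le> (20/19) * x\<^sup>2 + 20 * y\<^sup>2" for x y :: real
  proof -
    have "0 \<le> (x - 19 * y)\<^sup>2 / 19" by simp
    moreover have "(20/19) * x\<^sup>2 + 20 * y\<^sup>2 - (x + y)\<^sup>2 = (x - 19 * y)\<^sup>2 / 19"
      by (simp add: power2_eq_square field_simps)
    ultimately show ?thesis by linarith
  qed
  have "(p + q) ^ 4 = ((p + q)\<^sup>2)\<^sup>2" by simp
  also have "\<dots> \<le> ((20/19) * p\<^sup>2 + 20 * q\<^sup>2)\<^sup>2"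
    by (intro power_mono sq) simp
  also have "\<dots> \<le> (20/19) * ((20/19) * p\<^sup>2)\<^sup>2 + 20 * (20 * q\<^sup>2)\<^sup>2" by (rule sq)
  also have "\<dots> = (8000 / 6859) * p ^ 4 + 8000 * q ^ 4"
    by (simp add: power2_eq_square power4_eq_xxxx field_simps)
  finally show ?thesis .
qed

lemma Phi_add: "Phi \<omega> n d v \<le> (8000 / 6859) * Phi \<omega> n d u + 8000 * Phi \<omega> n d (\<lambda>j. v j - u j)"
proof -
  have "(\<Sum>j<d. \<omega> i j * v j) = (\<Sum>j<d. \<omega> i j * u j) + (\<Sum>j<d. \<omega> i j * (v j - u j))" for i
    by (simp add: sum.distrib[symmetric] algebra_simps)
  then have "Phi \<omega> n d v = (\<Sum>i<n. ((\<Sum>j<d. \<omega> i j * u j) + (\<Sum>j<d. \<omega> i j * (v j - u j))) ^ 4)"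
    unfolding Phi_def by simp
  also have "\<dots> \<le> (\<Sum>i<n. (8000 / 6859) * (\<Sum>j<d. \<omega> i j * u j) ^ 4 + 8000 * (\<Sum>j<d. \<omega> i j * (v j - u j)) ^ 4)"
    by (rule sum_mono) (rule quart_ineq)
  also have "\<dots> = (8000 / 6859) * Phi \<omega> n d u + 8000 * Phi \<omega> n d (\<lambda>j. v j - u j)"
    unfolding Phi_def by (simp add: sum.distrib sum_distrib_left)
  finally show ?thesis .
qed

lemma Phi_hom:
  assumes M: "\<And>x. nsq d x = 1 \<Longrightarrow> Phi \<omega> n d x \<le> M" and M0: "0 \<le> M"
  shows "Phi \<omega> n d w \<le> (nsq d w)\<^sup>2 * M"
proof (cases "nsq d w = 0")
  case True
  then have "\<forall>j\<in>{..<d}. (w j)\<^sup>2 = 0" unfolding nsq_def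
    by (subst sum_nonneg_eq_0_iff[symmetric]) auto
  then have "Phi \<omega> n d w = 0" unfolding Phi_def by simp
  then show ?thesis using True by simp
next
  case False
  define r where "r = sqrt (nsq d w)"
  have r0: "0 < r" using False nsq_nonneg[of d w] by (simp add: r_def)
  have r2: "r\<^sup>2 = nsq d w" using nsq_nonneg[of d w] by (simp add: r_def)
  define x where "x = (\<lambda>j. w j / r)"
  have wx: "w = (\<lambda>j. r * x j)" using r0 by (auto simp: x_def)
  have "nsq d x = 1"
  proof -
    have "nsq d w = r\<^sup>2 * nsq d x" by (subst wx) (simp add: nsq_scale)
    then show ?thesis using r2 False by simp
  qed
  then have "Phi \<omega> n d x \<le> M" by (rule M)
  have "Phi \<omega> n d w = r ^ 4 * Phi \<omega> n d x" by (subst wx) (simp add: Phi_scale)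
  also have "\<dots> \<le> r ^ 4 * M" using \<open>Phi \<omega> n d x \<le> M\<close> by (intro mult_left_mono) auto
  also have "r ^ 4 = (nsq d w)\<^sup>2"
  proof -
    have "r ^ 4 = (r\<^sup>2)\<^sup>2" by (simp add: power_mult[symmetric])
    then show ?thesis using r2 by simp
  qed
  finally show ?thesis .
qed

definition hh :: "nat \<Rightarrow> real" where "hh d = 1 / (10 * sqrt (real d))"
definition um :: "nat \<Rightarrow> (nat \<Rightarrow> int) \<Rightarrow> nat \<Rightarrow> real" where
  "um d m = (\<lambda>j. if j < d then hh d * of_int (m j) else 0)"
definition Net :: "nat \<Rightarrow> (nat \<Rightarrow> int) set" where
  "Net d = {m \<in> PiE {..<d} (\<lambda>_. {- int (11 * d) .. int (11 * d)}). (\<Sum>j<d. (real_of_int (m j))\<^sup>2) \<le> 111 * real d}"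

lemma finite_Net: "finite (Net d)"
  unfolding Net_def
  by (rule finite_subset[of _ "PiE {..<d} (\<lambda>_. {- int (11 * d) .. int (11 * d)})"]) (auto intro!: finite_PiE)

lemma nsq_le_L2: "nsq d w = (L2_set w {..<d})\<^sup>2"
  unfolding nsq_def L2_set_def by (simp add: sum_nonneg)

lemma rounding:
  assumes d: "1 \<le> d" and v: "nsq d v = 1"
  shows "\<exists>m\<in>Net d. nsq d (\<lambda>j. v j - um d m j) \<le> 1/400 \<and> nsq d (um d m) \<le> (21/20)\<^sup>2"
proof -
  let ?h = "hh d"
  have sd: "1 \<le> sqrt (real d)" using d by simp
  have h0: "0 < ?h" using sd by (simp add: hh_def)
  have hsq: "?h\<^sup>2 = 1 / (100 * real d)" using d by (simp add: hh_def power2_eq_square field_simps)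
  define m where "m = restrict (\<lambda>j. round (v j / ?h)) {..<d}"
  have err: "\<bar>v j - um d m j\<bar> \<le> ?h / 2" if "j < d" for j
  proof -
    define x where "x = v j / ?h"
    have r: "\<bar>of_int (round x) - x\<bar> \<le> 1/2" by (rule of_int_round_abs_le)
    have "?h * x = v j" using h0 by (simp add: x_def)
    then have "?h * of_int (round x) - v j = ?h * (of_int (round x) - x)" by (simp add: right_diff_distrib)
    then have "\<bar>?h * of_int (round x) - v j\<bar> = ?h * \<bar>of_int (round x) - x\<bar>" using h0 by (simp add: abs_mult)
    also have "\<dots> \<le> ?h * (1/2)" using r h0 by (intro mult_left_mono) auto
    finally have "\<bar>?h * of_int (round (v j / ?h)) - v j\<bar> \<le> ?h / 2" by (simp add: x_def)
    then show ?thesis using that by (simp add: um_def m_def abs_minus_commute)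
  qed
  have e1: "nsq d (\<lambda>j. v j - um d m j) \<le> 1/400"
  proof -
    have "nsq d (\<lambda>j. v j - um d m j) \<le> (\<Sum>j<d. (?h / 2)\<^sup>2)"
      unfolding nsq_def
    proof (rule sum_mono)
      fix j assume "j \<in> {..<d}"
      then have "\<bar>v j - um d m j\<bar> \<le> ?h / 2" using err by simp
      from power_mono[OF this abs_ge_zero, of 2]
      show "(v j - um d m j)\<^sup>2 \<le> (?h / 2)\<^sup>2" by simp
    qed
    also have "\<dots> = real d * ?h\<^sup>2 / 4" by (simp add: power_divide)
    also have "\<dots> = 1/400" using d by (simp add: hsq)
    finally show ?thesis .
  qed
  have e2: "nsq d (um d m) \<le> (21/20)\<^sup>2"
  proof -
    have "L2_set (um d m) {..<d} = L2_set (\<lambda>j. v j + (um d m j - v j)) {..<d}" by simp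
    also have "\<dots> \<le> L2_set v {..<d} + L2_set (\<lambda>j. um d m j - v j) {..<d}" by (rule L2_set_triangle_ineq)
    also have "L2_set v {..<d} = 1" using v by (simp add: nsq_def L2_set_def)
    also have "L2_set (\<lambda>j. um d m j - v j) {..<d} \<le> 1/20"
    proof -
      have "(L2_set (\<lambda>j. um d m j - v j) {..<d})\<^sup>2 = nsq d (\<lambda>j. v j - um d m j)"
        by (simp add: nsq_le_L2 L2_set_def power2_commute)
      also have "\<dots> \<le> (1/20)\<^sup>2" using e1 by (simp add: power2_eq_square)
      finally show ?thesis by (rule power2_le_imp_le) simp
    qed
    finally have "L2_set (um d m) {..<d} \<le> 21/20" by simp
    then show ?thesis unfolding nsq_le_L2 by (intro power_mono) (auto simp: L2_set_nonneg)
  qed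
  have mN: "m \<in> Net d"
  proof -
    have box: "m j \<in> {- int (11 * d) .. int (11 * d)}" if "j < d" for j
    proof -
      have "(v j)\<^sup>2 \<le> nsq d v" unfolding nsq_def
        by (rule member_le_sum[where f="\<lambda>j. (v j)\<^sup>2"]) (use that in auto)
      then have "\<bar>v j\<bar> \<le> 1" using v by (simp add: abs_square_le_1)
      moreover have "v j / ?h = v j * (10 * sqrt (real d))" by (simp add: hh_def)
      ultimately have "\<bar>v j / ?h\<bar> \<le> 1 * (10 * sqrt (real d))"
        by (simp only: abs_mult) (intro mult_mono, auto)
      also have "\<dots> \<le> 10 * real d"
      proof -
        have "sqrt (real d) \<le> real d" by (rule real_le_lsqrt) (use d in \<open>auto simp: power2_eq_square\<close>)
        then show ?thesis by simp
      qed
      finally have a: "\<bar>v j / ?h\<bar> \<le> 10 * real d" .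
      have "\<bar>real_of_int (round (v j / ?h))\<bar> \<le> 10 * real d + 1/2"
        using of_int_round_abs_le[of "v j / ?h"] a by linarith
      then have "real_of_int \<bar>round (v j / ?h)\<bar> \<le> real_of_int (int (11 * d))" using d by simp
      then have "\<bar>round (v j / ?h)\<bar> \<le> int (11 * d)" by (simp only: of_int_le_iff)
      then show ?thesis using that by (simp add: m_def abs_le_iff)
    qed
    have "(\<Sum>j<d. (real_of_int (m j))\<^sup>2) = nsq d (um d m) / ?h\<^sup>2"
      using h0 by (simp add: nsq_def um_def sum_divide_distrib power_mult_distrib)
    also have "\<dots> = 100 * real d * nsq d (um d m)" using d by (simp add: hsq)
    also have "\<dots> \<le> 100 * real d * (21/20)\<^sup>2" using e2 by (intro mult_left_mono) auto
    also have "\<dots> \<le> 111 * real d" by (simp add: power2_eq_square)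
    finally show ?thesis unfolding Net_def using box by (auto simp: m_def PiE_iff)
  qed
  show ?thesis using mN e1 e2 by blast
qed

lemma det:
  assumes d: "1 \<le> d" and n: "1 \<le> n"
    and hyp: "\<And>m. m \<in> Net d \<Longrightarrow> Phi \<omega> n d (um d m) \<le> 5 * real n * (nsq d (um d m))\<^sup>2"
    and v: "nsq d v = 1"
  shows "Phi \<omega> n d v \<le> 8 * real n"
proof -
  define U where "U = {w. nsq d w = 1}"
  define M where "M = Sup (Phi \<omega> n d ` U)"
  define B where "B = (\<Sum>i<n. (\<Sum>j<d. (\<omega> i j)\<^sup>2)\<^sup>2)"
  have bnd: "Phi \<omega> n d w \<le> B" if "w \<in> U" for w
    unfolding Phi_def B_def
  proof (rule sum_mono)
    fix i
    have cs: "(\<Sum>j<d. \<omega> i j * w j)\<^sup>2 \<le> (\<Sum>j<d. (\<omega> i j)\<^sup>2) * (\<Sum>j<d. (w j)\<^sup>2)"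
      by (rule Cauchy_Schwarz_ineq_sum)
    then have cs': "(\<Sum>j<d. \<omega> i j * w j)\<^sup>2 \<le> (\<Sum>j<d. (\<omega> i j)\<^sup>2)"
      using that by (simp add: U_def nsq_def)
    have "(\<Sum>j<d. \<omega> i j * w j) ^ 4 = ((\<Sum>j<d. \<omega> i j * w j)\<^sup>2)\<^sup>2" by simp
    also have "\<dots> \<le> (\<Sum>j<d. (\<omega> i j)\<^sup>2)\<^sup>2" by (intro power_mono cs') simp
    finally show "(\<Sum>j<d. \<omega> i j * w j) ^ 4 \<le> (\<Sum>j<d. (\<omega> i j)\<^sup>2)\<^sup>2" .
  qed
  have bdd: "bdd_above (Phi \<omega> n d ` U)" by (rule bdd_aboveI[where M=B]) (use bnd in auto)
  define e0 where "e0 = (\<lambda>j::nat. if j = 0 then (1::real) else 0)"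
  have e0U: "e0 \<in> U"
  proof -
    have "(\<Sum>j<d. (e0 j)\<^sup>2) = (\<Sum>j\<in>{0}. (e0 j)\<^sup>2)"
      by (rule sum.mono_neutral_right) (use d in \<open>auto simp: e0_def\<close>)
    then show ?thesis by (simp add: U_def nsq_def e0_def)
  qed
  have Une: "U \<noteq> {}" using e0U by auto
  have up: "Phi \<omega> n d x \<le> M" if "nsq d x = 1" for x
    unfolding M_def by (rule cSup_upper[OF _ bdd]) (use that in \<open>auto simp: U_def\<close>)
  have M0: "0 \<le> M" using up[of e0] e0U Phi_nonneg[of \<omega> n d e0] by (simp add: U_def)
  have key: "Phi \<omega> n d x \<le> 71/10 * real n + M / 20" if "x \<in> U" for x
  proof -
    have x1: "nsq d x = 1" using that by (simp add: U_def)
    obtain m where m: "m \<in> Net d" and e1: "nsq d (\<lambda>j. x j - um d m j) \<le> 1/400"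
      and e2: "nsq d (um d m) \<le> (21/20)\<^sup>2"
      using rounding[OF d x1] by blast
    have "Phi \<omega> n d x \<le> (8000 / 6859) * Phi \<omega> n d (um d m) + 8000 * Phi \<omega> n d (\<lambda>j. x j - um d m j)"
      by (rule Phi_add)
    also have "Phi \<omega> n d (um d m) \<le> 5 * real n * ((21/20)\<^sup>2)\<^sup>2"
    proof -
      have "(nsq d (um d m))\<^sup>2 \<le> ((21/20)\<^sup>2)\<^sup>2" using e2 nsq_nonneg by (intro power_mono) auto
      then have "5 * real n * (nsq d (um d m))\<^sup>2 \<le> 5 * real n * ((21/20)\<^sup>2)\<^sup>2" by (intro mult_left_mono) auto
      then show ?thesis using hyp[OF m] by linarith
    qed
    also have "Phi \<omega> n d (\<lambda>j. x j - um d m j) \<le> (1/400)\<^sup>2 * M"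
    proof -
      have "Phi \<omega> n d (\<lambda>j. x j - um d m j) \<le> (nsq d (\<lambda>j. x j - um d m j))\<^sup>2 * M"
        by (rule Phi_hom[OF up M0])
      also have "\<dots> \<le> (1/400)\<^sup>2 * M" using e1 nsq_nonneg M0 by (intro mult_right_mono power_mono) auto
      finally show ?thesis .
    qed
    finally have "Phi \<omega> n d x \<le> 8000 / 6859 * (5 * real n * ((21 / 20)\<^sup>2)\<^sup>2) + 8000 * ((1 / 400)\<^sup>2 * M)"
      by simp
    also have "\<dots> \<le> 71/10 * real n + M / 20" using n M0 by (simp add: power2_eq_square)
    finally show ?thesis .
  qed
  have "Sup (Phi \<omega> n d ` U) \<le> 71/10 * real n + M / 20"
    by (rule cSup_least) (use Une key in auto)
  then have "M \<le> 71/10 * real n + M / 20" by (simp only: M_def[symmetric])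
  then have "M \<le> 8 * real n" using n by linarith
  then show ?thesis using up[OF v] by linarith
qed

definition hk :: "int \<Rightarrow> real" where "hk k = (if k = 0 then 1 else 1 / (real_of_int k)\<^sup>2)"

lemma sum_hk: "(\<Sum>k\<in>{- int K..int K}. hk k) \<le> 5 - 4 / (real K + 1)"
proof (induction K)
  case 0
  then show ?case by (simp add: hk_def)
next
  case (Suc K)
  have set: "{- int (Suc K)..int (Suc K)} = insert (int K + 1) (insert (- (int K + 1)) {- int K..int K})"
    by auto
  have "(\<Sum>k\<in>{- int (Suc K)..int (Suc K)}. hk k) = hk (int K + 1) + hk (- (int K + 1)) + (\<Sum>k\<in>{- int K..int K}. hk k)"
    unfolding set by (simp add: add.assoc)
  also have "hk (int K + 1) = 1 / (real K + 1)\<^sup>2" by (simp add: hk_def)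
  also have "hk (- (int K + 1)) = 1 / (real K + 1)\<^sup>2" by (simp add: hk_def) (simp add: power2_eq_square algebra_simps)
  finally have eq: "(\<Sum>k\<in>{- int (Suc K)..int (Suc K)}. hk k) = 2 / (real K + 1)\<^sup>2 + (\<Sum>k\<in>{- int K..int K}. hk k)"
    by simp
  define a where "a = real K + 1"
  have a1: "1 \<le> a" by (simp add: a_def)
  have "2 / a\<^sup>2 + (5 - 4 / a) \<le> 5 - 4 / (a + 1)"
  proof -
    have "4 / a - 4 / (a + 1) = 4 / (a * (a + 1))" using a1 by (simp add: field_simps)
    also have "2 / a\<^sup>2 \<le> 4 / (a * (a + 1))"
    proof -
      have "4 / (a * (2 * a)) \<le> 4 / (a * (a + 1))"
        using a1 by (intro divide_left_mono mult_left_mono mult_pos_pos) auto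
      moreover have "4 / (a * (2 * a)) = 2 / a\<^sup>2" using a1 by (simp add: power2_eq_square)
      ultimately show ?thesis by simp
    qed
    finally show ?thesis by simp
  qed
  then show ?case using eq Suc.IH by (simp add: a_def add.commute)
qed

lemma sum_exp_box: "(\<Sum>k\<in>{- int K..int K}. exp (- (real_of_int k)\<^sup>2 / 111)) \<le> 555"
proof -
  have pw: "exp (- (real_of_int k)\<^sup>2 / 111) \<le> 111 * hk k" for k
  proof (cases "k = 0")
    case True then show ?thesis by (simp add: hk_def)
  next
    case False
    define y where "y = (real_of_int k)\<^sup>2 / 111"
    have y0: "0 < y" using False by (simp add: y_def)
    have "y \<le> exp y" using exp_ge_add_one_self[of y] by linarith
    then have "exp (- y) \<le> 1 / y" using y0 by (simp add: exp_minus field_simps)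
    then show ?thesis using False by (simp add: hk_def y_def)
  qed
  have "(\<Sum>k\<in>{- int K..int K}. exp (- (real_of_int k)\<^sup>2 / 111)) \<le> (\<Sum>k\<in>{- int K..int K}. 111 * hk k)"
    by (rule sum_mono) (rule pw)
  also have "\<dots> = 111 * (\<Sum>k\<in>{- int K..int K}. hk k)" by (simp add: sum_distrib_left)
  also have "\<dots> \<le> 111 * 5"
  proof -
    have "(\<Sum>k\<in>{- int K..int K}. hk k) \<le> 5" using sum_hk[of K] by (smt (verit) divide_nonneg_nonneg of_nat_0_le_iff)
    then show ?thesis by simp
  qed
  finally show ?thesis by simp
qed

lemma card_Net: "real (card (Net d)) \<le> exp (11 * real d)"
proof -
  let ?K = "int (11 * d)"
  let ?B = "PiE {..<d} (\<lambda>_. {- ?K .. ?K})"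
  define w where "w = (\<lambda>m::nat\<Rightarrow>int. exp (real d) * (\<Prod>j<d. exp (- (real_of_int (m j))\<^sup>2 / 111)))"
  have w1: "1 \<le> w m" if "m \<in> Net d" for m
  proof -
    have s: "(\<Sum>j<d. (real_of_int (m j))\<^sup>2) \<le> 111 * real d" using that by (simp add: Net_def)
    have "w m = exp (real d + (\<Sum>j<d. - (real_of_int (m j))\<^sup>2 / 111))"
      by (simp add: w_def exp_add exp_sum)
    also have "real d + (\<Sum>j<d. - (real_of_int (m j))\<^sup>2 / 111) = real d - (\<Sum>j<d. (real_of_int (m j))\<^sup>2) / 111"
      by (simp add: sum_negf sum_divide_distrib)
    finally show ?thesis using s by simp
  qed
  have w0: "0 \<le> w m" for m by (simp add: w_def prod_nonneg)
  have sub: "Net d \<subseteq> ?B" by (auto simp: Net_def)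
  have "real (card (Net d)) = (\<Sum>m\<in>Net d. 1)" by simp
  also have "\<dots> \<le> (\<Sum>m\<in>Net d. w m)" by (rule sum_mono) (rule w1)
  also have "\<dots> \<le> (\<Sum>m\<in>?B. w m)"
    by (rule sum_mono2) (use sub w0 in \<open>auto intro!: finite_PiE\<close>)
  also have "\<dots> = exp (real d) * (\<Sum>m\<in>?B. \<Prod>j<d. exp (- (real_of_int (m j))\<^sup>2 / 111))"
    by (simp add: w_def sum_distrib_left)
  also have "(\<Sum>m\<in>?B. \<Prod>j<d. exp (- (real_of_int (m j))\<^sup>2 / 111)) = (\<Prod>j<d. \<Sum>k\<in>{- ?K .. ?K}. exp (- (real_of_int k)\<^sup>2 / 111))"
    by (rule prod_sum_PiE[symmetric]) auto
  also have "\<dots> \<le> (\<Prod>j<d. (555::real))"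
    by (rule prod_mono) (use sum_exp_box[of "11 * d"] in \<open>auto intro: sum_nonneg\<close>)
  also have "\<dots> = 555 ^ d" by simp
  also have "(555::real) ^ d \<le> exp 10 ^ d"
  proof (rule power_mono)
    have "(2::real) ^ 10 \<le> exp 1 ^ 10" by (rule power_mono) (use exp_ge_add_one_self[of 1] in auto)
    then show "(555::real) \<le> exp 10" by (simp add: exp_of_nat_mult[symmetric])
  qed simp
  also have "exp 10 ^ d = exp (10 * real d)" by (simp add: exp_of_nat_mult[symmetric] mult.commute)
  finally have "real (card (Net d)) \<le> exp (real d) * exp (10 * real d)" by simp
  then show ?thesis by (simp add: exp_add[symmetric])
qed

definition vq :: "rat list \<Rightarrow> nat \<Rightarrow> real" where "vq rs = (\<lambda>j. of_rat (rs ! j))"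

lemma comp_meas[measurable]:
  assumes "i \<in> {..<n}" "j \<in> {..<d}"
  shows "(\<lambda>\<omega>. \<omega> i j) \<in> borel_measurable (gaussian_sample n d)"
proof -
  have "(\<lambda>x. x j) \<in> PiM {..<d} (\<lambda>_. std_gaussian) \<rightarrow>\<^sub>M std_gaussian"
    by (rule measurable_component_singleton) (use assms in simp)
  then have j: "(\<lambda>x. x j) \<in> borel_measurable (PiM {..<d} (\<lambda>_. std_gaussian))"
    by (simp add: measurable_cong_sets[OF refl sets_std_gaussian])
  have i: "(\<lambda>\<omega>. \<omega> i) \<in> gaussian_sample n d \<rightarrow>\<^sub>M PiM {..<d} (\<lambda>_. std_gaussian)"
    unfolding gaussian_sample_def by (rule measurable_component_singleton) (use assms in simp)
  show ?thesis by (rule measurable_compose[OF i j])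
qed

lemma Phi_meas[measurable]:
  "(\<lambda>\<omega>. Phi \<omega> n d w) \<in> borel_measurable (gaussian_sample n d)"
  unfolding Phi_def by measurable

lemma approx_seq:
  fixes v :: "nat \<Rightarrow> real"
  shows "\<exists>R::nat \<Rightarrow> nat \<Rightarrow> rat. \<forall>k j. \<bar>of_rat (R k j) - v j\<bar> < 1 / real (Suc k)"
proof -
  have "\<forall>k j. \<exists>r::rat. \<bar>of_rat r - v j\<bar> < 1 / real (Suc k)"
  proof (intro allI)
    fix k j
    have "v j < v j + 1 / real (Suc k)" by simp
    from Rats_dense_in_real[OF this] obtain q where q: "q \<in> \<rat>" "v j < q" "q < v j + 1 / real (Suc k)" by blast
    then obtain r where "q = of_rat r" by (auto elim: Rats_cases)
    then show "\<exists>r::rat. \<bar>of_rat r - v j\<bar> < 1 / real (Suc k)" using q by (intro exI[of _ r]) auto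
  qed
  then show ?thesis by metis
qed

lemma conv_seq:
  fixes x :: "nat \<Rightarrow> real"
  assumes "\<And>k. \<bar>x k - c\<bar> < 1 / real (Suc k)"
  shows "x \<longlonglongrightarrow> c"
proof (rule LIMSEQ_I)
  fix r :: real assume r: "0 < r"
  obtain N where N: "inverse (real (Suc N)) < r" using reals_Archimedean[OF r] by auto
  show "\<exists>no. \<forall>k\<ge>no. norm (x k - c) < r"
  proof (intro exI allI impI)
    fix k assume "N \<le> k"
    then have "1 / real (Suc k) \<le> 1 / real (Suc N)" by (intro divide_left_mono) auto
    then show "norm (x k - c) < r" using assms[of k] N by (simp add: inverse_eq_divide)
  qed
qed

lemma good_iff:
  assumes n: "1 \<le> n"
  shows "(\<forall>v. nsq d v = 1 \<longrightarrow> Phi \<omega> n d v \<le> 8 * real n) \<longleftrightarrow>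
         (\<forall>rs. Phi \<omega> n d (vq rs) \<le> 8 * real n * (nsq d (vq rs))\<^sup>2)"
proof
  assume H: "\<forall>v. nsq d v = 1 \<longrightarrow> Phi \<omega> n d v \<le> 8 * real n"
  show "\<forall>rs. Phi \<omega> n d (vq rs) \<le> 8 * real n * (nsq d (vq rs))\<^sup>2"
  proof
    fix rs
    have "Phi \<omega> n d (vq rs) \<le> (nsq d (vq rs))\<^sup>2 * (8 * real n)"
      by (rule Phi_hom) (use H in auto)
    then show "Phi \<omega> n d (vq rs) \<le> 8 * real n * (nsq d (vq rs))\<^sup>2" by (simp add: mult.commute)
  qed
next
  assume H: "\<forall>rs. Phi \<omega> n d (vq rs) \<le> 8 * real n * (nsq d (vq rs))\<^sup>2"
  show "\<forall>v. nsq d v = 1 \<longrightarrow> Phi \<omega> n d v \<le> 8 * real n"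
  proof (intro allI impI)
    fix v assume v: "nsq d v = 1"
    obtain R where R: "\<And>k j. \<bar>of_rat (R k j) - v j\<bar> < 1 / real (Suc k)"
      using approx_seq[of v] by blast
    define q where "q = (\<lambda>k. vq (map (R k) [0..<d]))"
    have qj: "q k j = of_rat (R k j)" if "j < d" for k j
      using that by (simp add: q_def vq_def)
    have cj: "(\<lambda>k. q k j) \<longlonglongrightarrow> v j" if "j < d" for j
      by (rule conv_seq) (use R qj that in simp)
    have L1: "(\<lambda>k. Phi \<omega> n d (q k)) \<longlonglongrightarrow> Phi \<omega> n d v"
      unfolding Phi_def by (intro tendsto_intros) (use cj in auto)
    have L2: "(\<lambda>k. 8 * real n * (nsq d (q k))\<^sup>2) \<longlonglongrightarrow> 8 * real n * (nsq d v)\<^sup>2"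
      unfolding nsq_def by (intro tendsto_intros) (use cj in auto)
    have "Phi \<omega> n d v \<le> 8 * real n * (nsq d v)\<^sup>2"
      by (rule LIMSEQ_le[OF L1 L2]) (use H in \<open>auto simp: q_def\<close>)
    then show "Phi \<omega> n d v \<le> 8 * real n" using v by simp
  qed
qed

lemma good_set_sets:
  assumes n: "1 \<le> n"
  shows "{\<omega> \<in> space (gaussian_sample n d). \<forall>v. nsq d v = 1 \<longrightarrow> Phi \<omega> n d v \<le> 8 * real n}
    \<in> sets (gaussian_sample n d)"
proof -
  have "{\<omega> \<in> space (gaussian_sample n d). \<forall>v. nsq d v = 1 \<longrightarrow> Phi \<omega> n d v \<le> 8 * real n}
     = {\<omega> \<in> space (gaussian_sample n d). \<forall>rs. Phi \<omega> n d (vq rs) \<le> 8 * real n * (nsq d (vq rs))\<^sup>2}"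
    using good_iff[OF n] by blast
  also have "\<dots> \<in> sets (gaussian_sample n d)" by measurable
  finally show ?thesis .
qed

lemma Phi_zero: "nsq d w = 0 \<Longrightarrow> Phi \<omega> n d w = 0"
proof -
  assume "nsq d w = 0"
  then have "\<forall>j\<in>{..<d}. (w j)\<^sup>2 = 0" unfolding nsq_def
    by (subst sum_nonneg_eq_0_iff[symmetric]) auto
  then show "Phi \<omega> n d w = 0" unfolding Phi_def by simp
qed

lemma bad_bound:
  assumes n: "1 \<le> n"
  shows "measure (gaussian_sample n d) {\<omega> \<in> space (gaussian_sample n d). 5 * real n * (nsq d x)\<^sup>2 < Phi \<omega> n d x}
    \<le> 4 * exp (- sqrt (real n) / 4608)"
proof (cases "nsq d x = 0")
  case True
  then have e: "{\<omega> \<in> space (gaussian_sample n d). 5 * real n * (nsq d x)\<^sup>2 < Phi \<omega> n d x} = {}"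
    using Phi_zero by auto
  show ?thesis unfolding e by simp
next
  case False
  define r where "r = sqrt (nsq d x)"
  have r0: "0 < r" using False nsq_nonneg[of d x] by (simp add: r_def)
  have r2: "r\<^sup>2 = nsq d x" using nsq_nonneg[of d x] by (simp add: r_def)
  define w where "w = (\<lambda>j. x j / r)"
  have xw: "x = (\<lambda>j. r * w j)" using r0 by (auto simp: w_def)
  have w1: "nsq d w = 1"
  proof -
    have "nsq d x = r\<^sup>2 * nsq d w" by (subst xw) (simp add: nsq_scale)
    then show ?thesis using r2 False by simp
  qed
  have r4: "(nsq d x)\<^sup>2 = r ^ 4"
  proof -
    have "r ^ 4 = (r\<^sup>2)\<^sup>2" by (simp add: power_mult[symmetric])
    then show ?thesis using r2 by simp
  qed
  have "{\<omega> \<in> space (gaussian_sample n d). 5 * real n * (nsq d x)\<^sup>2 < Phi \<omega> n d x}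
      = {\<omega> \<in> space (gaussian_sample n d). 5 * real n < (\<Sum>i<n. (gu d w (\<omega> i))^4)}"
  proof -
    have "5 * real n * (nsq d x)\<^sup>2 < Phi \<omega> n d x \<longleftrightarrow> 5 * real n < Phi \<omega> n d w" for \<omega>
    proof -
      have "Phi \<omega> n d x = r ^ 4 * Phi \<omega> n d w" by (subst xw) (simp add: Phi_scale)
      then show ?thesis using r0 unfolding r4 by (simp add: mult.commute)
    qed
    moreover have "Phi \<omega> n d w = (\<Sum>i<n. (gu d w (\<omega> i))^4)" for \<omega>
      by (simp add: Phi_def gu_def)
    ultimately show ?thesis by auto
  qed
  also have "measure (gaussian_sample n d) \<dots> \<le> 4 * exp (- sqrt (real n) / 4608)"
    by (rule tail_fixed) (use w1 n in \<open>auto simp: nsq_def\<close>)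
  finally show ?thesis .
qed

theorem mainTheorem8:
  shows "\<exists>C::real. C > 0 \<and>
    (\<forall>(d::nat) (n::nat) (\<delta>::real).
       d \<ge> 1 \<longrightarrow> 0 < \<delta> \<longrightarrow> \<delta> < 1 \<longrightarrow>
       real n \<ge> C * (real d ^ 2 + (ln (1 / \<delta>)) ^ 2) \<longrightarrow>
       measure (gaussian_sample n d)
         {\<omega> \<in> space (gaussian_sample n d).
            \<forall>v::nat \<Rightarrow> real. (\<Sum>j<d. (v j)\<^sup>2) = 1 \<longrightarrow>
              (1 / real n) * (\<Sum>i<n. (\<Sum>j<d. \<omega> i j * v j) ^ 4) \<le> 8}
       \<ge> 1 - \<delta>)"
proof (intro exI[of _ "4608\<^sup>2 * 338"] conjI allI impI)
  show "(0::real) < 4608\<^sup>2 * 338" by simp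
  fix d n :: nat and \<delta> :: real
  assume d: "1 \<le> d" and \<delta>0: "0 < \<delta>" and \<delta>1: "\<delta> < 1"
    and nC: "4608\<^sup>2 * 338 * (real d ^ 2 + (ln (1 / \<delta>)) ^ 2) \<le> real n"
  let ?P = "gaussian_sample n d"
  interpret P: prob_space ?P by (rule prob_space_sample)
  define L where "L = ln (1 / \<delta>)"
  have L0: "0 < L" using \<delta>0 \<delta>1 by (simp add: L_def)
  have eL: "exp (- L) = \<delta>" using \<delta>0 by (simp add: L_def ln_div exp_minus)
  have d1: "1 \<le> real d ^ 2" using d by simp
  have n1: "1 \<le> n"
  proof -
    have X: "1 \<le> real d ^ 2 + L ^ 2" using d1 by (simp add: add_increasing2)
    have "1 \<le> 4608\<^sup>2 * 338 * (real d ^ 2 + L ^ 2)"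
      using X by (simp add: power2_eq_square)
    then show ?thesis using nC unfolding L_def by simp
  qed
  have nC': "4608\<^sup>2 * 338 * (real d ^ 2 + L ^ 2) \<le> real n" using nC by (simp add: L_def)
  have sq: "4608 * (13 * real d + L) \<le> sqrt (real n)"
  proof (rule real_le_rsqrt)
    have "(13 * real d + L)\<^sup>2 \<le> 338 * (real d ^ 2 + L ^ 2)"
    proof -
      have h1: "0 \<le> (13 * real d - L)\<^sup>2" by simp
      have h2: "(13 * real d - L)\<^sup>2 = 169 * (real d * real d) - 26 * (real d * L) + L * L"
        by (simp add: power2_eq_square algebra_simps)
      have h3: "(13 * real d + L)\<^sup>2 = 169 * (real d * real d) + 26 * (real d * L) + L * L"
        by (simp add: power2_eq_square algebra_simps)
      have h4: "338 * (real d ^ 2 + L ^ 2) = 338 * (real d * real d) + 338 * (L * L)"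
        by (simp add: power2_eq_square algebra_simps)
      have h5: "0 \<le> L * L" "0 \<le> real d * real d" by simp_all
      show ?thesis using h1 h2 h3 h4 h5 by linarith
    qed
    then have "4608\<^sup>2 * (13 * real d + L)\<^sup>2 \<le> 4608\<^sup>2 * (338 * (real d ^ 2 + L ^ 2))"
      by (intro mult_left_mono) auto
    moreover have "(4608 * (13 * real d + L))\<^sup>2 = 4608\<^sup>2 * (13 * real d + L)\<^sup>2" by (simp only: power_mult_distrib)
    moreover have "4608\<^sup>2 * (338 * (real d ^ 2 + L ^ 2)) = 4608\<^sup>2 * 338 * (real d ^ 2 + L ^ 2)" by (simp only: mult.assoc)
    ultimately show "(4608 * (13 * real d + L))\<^sup>2 \<le> real n" using nC' by linarith
  qed
  define Bad where "Bad = (\<lambda>m. {\<omega> \<in> space ?P. 5 * real n * (nsq d (um d m))\<^sup>2 < Phi \<omega> n d (um d m)})"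
  have Bad_sets: "Bad m \<in> P.events" for m unfolding Bad_def by measurable
  define E where "E = space ?P - (\<Union>m\<in>Net d. Bad m)"
  have U_sets: "(\<Union>m\<in>Net d. Bad m) \<in> P.events"
    using finite_Net Bad_sets by (intro sets.finite_UN) auto
  have "P.prob (\<Union>m\<in>Net d. Bad m) \<le> (\<Sum>m\<in>Net d. P.prob (Bad m))"
    by (rule P.finite_measure_subadditive_finite) (use finite_Net Bad_sets in auto)
  also have "\<dots> \<le> (\<Sum>m\<in>Net d. 4 * exp (- sqrt (real n) / 4608))"
    by (rule sum_mono) (unfold Bad_def, rule bad_bound[OF n1])
  also have "\<dots> = real (card (Net d)) * (4 * exp (- sqrt (real n) / 4608))" by simp
  also have "\<dots> \<le> exp (11 * real d) * (4 * exp (- sqrt (real n) / 4608))"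
    by (intro mult_right_mono card_Net) auto
  also have "\<dots> \<le> \<delta>"
  proof -
    have "- sqrt (real n) / 4608 \<le> - (13 * real d + L)" using sq by simp
    then have a: "exp (11 * real d) * (4 * exp (- sqrt (real n) / 4608)) \<le> exp (11 * real d) * (4 * exp (- (13 * real d + L)))"
      by (intro mult_left_mono) auto
    have "11 * real d + - (13 * real d + L) = - 2 * real d + - L" by simp
    then have "exp (11 * real d) * exp (- (13 * real d + L)) = exp (- 2 * real d) * exp (- L)"
      by (simp only: exp_add[symmetric])
    then have e: "exp (11 * real d) * exp (- (13 * real d + L)) = exp (- 2 * real d) * \<delta>"
      by (simp only: eL)
    have b: "exp (11 * real d) * (4 * exp (- (13 * real d + L))) = 4 * (exp (11 * real d) * exp (- (13 * real d + L)))"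
      by (simp only: mult.left_commute)
    have c: "4 * exp (- 2 * real d) \<le> 1"
    proof -
      have "(2::real) ^ 2 \<le> exp 1 ^ 2" by (rule power_mono) (use exp_ge_add_one_self[of 1] in auto)
      then have "4 \<le> exp (2::real)" by (simp add: exp_of_nat_mult[symmetric])
      also have "exp 2 \<le> exp (2 * real d)" using d by simp
      finally have "4 * exp (- 2 * real d) \<le> exp (2 * real d) * exp (- 2 * real d)"
        by (intro mult_right_mono) auto
      also have "exp (2 * real d) * exp (- 2 * real d) = 1" by (simp add: exp_add[symmetric])
      finally show ?thesis .
    qed
    have c': "(4 * exp (- 2 * real d)) * \<delta> \<le> 1 * \<delta>" using c \<delta>0 by (intro mult_right_mono) auto
    have c'': "4 * (exp (- 2 * real d) * \<delta>) = (4 * exp (- 2 * real d)) * \<delta>" by (simp only: mult.assoc)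
    show ?thesis using a b e c' c'' by linarith
  qed
  finally have pU: "P.prob (\<Union>m\<in>Net d. Bad m) \<le> \<delta>" .
  have pE: "1 - \<delta> \<le> P.prob E"
    unfolding E_def using P.prob_compl[OF U_sets] pU by simp
  define G where "G = {\<omega> \<in> space ?P. \<forall>v. nsq d v = 1 \<longrightarrow> Phi \<omega> n d v \<le> 8 * real n}"
  have EG: "E \<subseteq> G"
  proof
    fix \<omega> assume w: "\<omega> \<in> E"
    have "Phi \<omega> n d v \<le> 8 * real n" if "nsq d v = 1" for v
    proof (rule det[OF d n1 _ that])
      fix m assume "m \<in> Net d"
      then show "Phi \<omega> n d (um d m) \<le> 5 * real n * (nsq d (um d m))\<^sup>2"
        using w unfolding E_def Bad_def by auto
    qed
    then show "\<omega> \<in> G" using w unfolding E_def G_def by auto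
  qed
  have G_sets: "G \<in> P.events" unfolding G_def by (rule good_set_sets[OF n1])
  have E_sets: "E \<in> P.events" unfolding E_def using U_sets by auto
  have "P.prob E \<le> P.prob G" by (rule P.finite_measure_mono[OF EG G_sets])
  moreover have "G = {\<omega> \<in> space ?P. \<forall>v::nat \<Rightarrow> real. (\<Sum>j<d. (v j)\<^sup>2) = 1 \<longrightarrow>
              (1 / real n) * (\<Sum>i<n. (\<Sum>j<d. \<omega> i j * v j) ^ 4) \<le> 8}"
  proof -
    have "(1 / real n) * y \<le> 8 \<longleftrightarrow> y \<le> 8 * real n" for y
      using n1 by (simp add: field_simps)
    then show ?thesis unfolding G_def nsq_def Phi_def by simp
  qed
  ultimately show "1 - \<delta> \<le> P.prob {\<omega> \<in> space ?P. \<forall>v::nat \<Rightarrow> real. (\<Sum>j<d. (v j)\<^sup>2) = 1 \<longrightarrow>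
              (1 / real n) * (\<Sum>i<n. (\<Sum>j<d. \<omega> i j * v j) ^ 4) \<le> 8}"
    using pE by simp
qed

end
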